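(* Let $\varphi:[0,\infty)\to(0,\infty)$ be continuous, strictly increasing, with $\varphi(x)\to\infty$ as $x\to\infty$, and rapidly growing: there exist $\varepsilon>0$ and $A>0$ such that $\varphi(x)/x^{1+\varepsilon}$ is increasing on $[A,\infty)$. Let $W(x)=\exp(\varphi(|x|))$ and $A_n=\varphi^{-1}(n)$. Then for all sufficiently large $n\in\mathbb N$, $$\sup_{x\ge A_n}\frac{|T_n(x/A_n)|}{W(x)}\le\frac{2^n}{e^n},$$ where $T_n$ is the Tchebyshev polynomial of the first kind of degree $n$.
   Context: $T_n(x)=\frac12\left((x+\sqrt{x^2-1})^n+(x-\sqrt{x^2-1})^n\right)$. *)

theory Defs
  imports "HOL-Analysis.Analysis"
begin

fun cheb_T :: "nat \<Rightarrow> real \<Rightarrow> real" where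
  "cheb_T 0 x = 1"
| "cheb_T (Suc 0) x = x"
| "cheb_T (Suc (Suc n)) x = 2 * x * cheb_T (Suc n) x - cheb_T n x"

definition phi_inv :: "(real \<Rightarrow> real) \<Rightarrow> real \<Rightarrow> real" where
  "phi_inv \<phi> y = (THE x. 0 \<le> x \<and> \<phi> x = y)"

end

theory Submission
  imports Defs
begin

lemma cheb_aux:
  assumes "t \<ge> 1"
  shows "1 \<le> cheb_T n t \<and> cheb_T n t \<le> cheb_T (Suc n) t \<and> cheb_T (Suc n) t \<le> 2 * t * cheb_T n t"
proof (induction n)
  case 0
  then show ?case using assms by simp
next
  case (Suc n)
  then have a: "1 \<le> cheb_T n t" "cheb_T n t \<le> cheb_T (Suc n) t" by auto
  have "cheb_T (Suc (Suc n)) t = 2 * t * cheb_T (Suc n) t - cheb_T n t" by simp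
  moreover have "2 * t * cheb_T (Suc n) t \<ge> 2 * cheb_T (Suc n) t"
    using assms a by (intro mult_right_mono) auto
  ultimately have "cheb_T (Suc n) t \<le> cheb_T (Suc (Suc n)) t" using a by linarith
  moreover have "cheb_T (Suc (Suc n)) t \<le> 2 * t * cheb_T (Suc n) t" using a by simp
  ultimately show ?case using a by linarith
qed

lemma cheb_bound:
  assumes "t \<ge> 1"
  shows "\<bar>cheb_T n t\<bar> \<le> (2 * t) ^ n"
proof -
  have "cheb_T n t \<le> (2 * t) ^ n"
  proof (induction n)
    case 0 then show ?case by simp
  next
    case (Suc n)
    have "cheb_T (Suc n) t \<le> 2 * t * cheb_T n t" using cheb_aux[OF assms] by blast
    also have "\<dots> \<le> 2 * t * (2 * t) ^ n" using Suc assms by (intro mult_left_mono) auto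
    finally show ?case by simp
  qed
  moreover have "cheb_T n t \<ge> 1" using cheb_aux[OF assms] by blast
  ultimately show ?thesis by simp
qed

theorem lemma2:
  fixes \<phi> :: "real \<Rightarrow> real"
  assumes cont: "continuous_on {0..} \<phi>"
    and pos: "\<forall>x\<ge>0. \<phi> x > 0"
    and incr: "strict_mono_on {0..} \<phi>"
    and lim: "filterlim \<phi> at_top at_top"
    and rapid: "\<exists>\<epsilon>>0. \<exists>A>0. mono_on {A..} (\<lambda>x. \<phi> x / x powr (1 + \<epsilon>))"
  shows "\<forall>\<^sub>F n in sequentially.
           \<forall>x \<ge> phi_inv \<phi> (real n).
             \<bar>cheb_T n (x / phi_inv \<phi> (real n))\<bar> / exp (\<phi> \<bar>x\<bar>) \<le> 2 ^ n / exp (real n)"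
proof -
  obtain \<epsilon> A where ep: "\<epsilon> > 0" and A: "A > 0"
    and mono: "mono_on {A..} (\<lambda>x. \<phi> x / x powr (1 + \<epsilon>))" using rapid by blast
  have inv: "0 \<le> phi_inv \<phi> y \<and> \<phi> (phi_inv \<phi> y) = y" if y: "y \<ge> \<phi> 0" for y
  proof -
    have "\<forall>\<^sub>F x in at_top. \<phi> x \<ge> y" using lim by (simp add: filterlim_at_top)
    then obtain b0 where b0: "\<And>x. x \<ge> b0 \<Longrightarrow> \<phi> x \<ge> y" by (auto simp: eventually_at_top_linorder)
    define b where "b = max b0 0"
    have "continuous_on {0..b} \<phi>" using cont by (rule continuous_on_subset) auto
    then obtain x where x: "0 \<le> x" "x \<le> b" "\<phi> x = y"
      using IVT'[of \<phi> 0 y b] y b0[of b] by (auto simp: b_def)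
    have uniq: "z = x" if "0 \<le> z" "\<phi> z = y" for z
    proof (rule ccontr)
      assume "z \<noteq> x"
      then consider "z < x" | "x < z" by linarith
      then show False
      proof cases
        case 1 then have "\<phi> z < \<phi> x" using strict_mono_onD[OF incr, of z x] that x by auto
        then show False using that x by simp
      next
        case 2 then have "\<phi> x < \<phi> z" using strict_mono_onD[OF incr, of x z] that x by auto
        then show False using that x by simp
      qed
    qed
    have "phi_inv \<phi> y = x" unfolding phi_inv_def
      by (rule the_equality) (use x uniq in blast)+
    then show ?thesis using x by simp
  qed
  have ev: "\<forall>\<^sub>F n in sequentially. n > nat \<lceil>max (\<phi> 0) (\<phi> A)\<rceil>" by (rule eventually_gt_at_top)
  show ?thesis
  proof (rule eventually_mono[OF ev], intro allI impI)
    fix n x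
    assume n: "n > nat \<lceil>max (\<phi> 0) (\<phi> A)\<rceil>" and x: "x \<ge> phi_inv \<phi> (real n)"
    have nr: "real n > \<phi> 0" "real n > \<phi> A" using n by linarith+
    define a where "a = phi_inv \<phi> (real n)"
    have a: "0 \<le> a" "\<phi> a = real n" using inv[of "real n"] nr by (auto simp: a_def)
    have aA: "a \<ge> A"
    proof (rule ccontr)
      assume "\<not> A \<le> a"
      then have "\<phi> a < \<phi> A" using strict_mono_onD[OF incr, of a A] a A by auto
      then show False using a nr by simp
    qed
    have apos: "a > 0" using aA A by simp
    define t where "t = x / a"
    have xa: "x \<ge> a" using x by (simp add: a_def)
    have t1: "t \<ge> 1" using xa apos by (simp add: t_def)
    have xt: "x = t * a" using apos by (simp add: t_def)
    have xpos: "x > 0" using xa apos by simp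
    have "\<phi> a / a powr (1 + \<epsilon>) \<le> \<phi> x / x powr (1 + \<epsilon>)"
      using mono_onD[OF mono, of a x] aA xa by auto
    then have "\<phi> x \<ge> \<phi> a * (x powr (1 + \<epsilon>) / a powr (1 + \<epsilon>))"
      using apos xpos by (simp add: field_simps)
    also have "x powr (1 + \<epsilon>) / a powr (1 + \<epsilon>) = t powr (1 + \<epsilon>)"
      using apos xpos by (simp add: t_def powr_divide)
    also have "t powr (1 + \<epsilon>) \<ge> t powr 1"
      using t1 ep by (intro powr_mono) auto
    then have "\<phi> a * t powr (1 + \<epsilon>) \<ge> \<phi> a * t" using a t1 by (intro mult_left_mono) auto
    finally have phx: "\<phi> x \<ge> real n * t" using a by simp
    have lnt: "ln t \<le> t - 1" using t1 by (intro ln_le_minus_one) auto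
    have "t ^ n = exp (real n * ln t)" using t1 by (simp add: exp_of_nat_mult)
    also have "\<dots> \<le> exp (real n * (t - 1))" using lnt using t1 by (simp add: mult_left_mono)
    finally have tn0: "t ^ n * exp (real n) \<le> exp (t * real n)"
      by (simp add: algebra_simps exp_diff field_simps)
    have tn: "t ^ n * exp (real n) \<le> exp (\<phi> x)"
      using tn0 phx by (smt (verit) exp_le_cancel_iff mult.commute)
    have "\<bar>cheb_T n t\<bar> / exp (\<phi> \<bar>x\<bar>) \<le> (2 * t) ^ n / exp (\<phi> x)"
      using cheb_bound[OF t1] xpos by (simp add: divide_right_mono)
    also have "\<dots> \<le> 2 ^ n / exp (real n)"
      using tn by (simp add: power_mult_distrib field_simps)
    finally show "\<bar>cheb_T n (x / phi_inv \<phi> (real n))\<bar> / exp (\<phi> \<bar>x\<bar>) \<le> 2 ^ n / exp (real n)"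
      by (simp add: t_def a_def)
  qed
qed

end
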